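(* Let $p$ be an odd prime, and let $a,b\in\mathbb{Z}$ with $\left(\frac ap\right)=1$ and $\left(\frac bp\right)=-1$. Then $$s_p(a)s_p(b)=\begin{cases}(-1)^{(p+3)/4}\delta(ab,p)&\text{if } p\equiv1\pmod4,\\(-1)^{(p-3)/4}&\text{if } p\equiv3\pmod4.\end{cases}$$
   Context: $\left(\frac{\cdot}{p}\right)$ is the Legendre symbol. For an integer $m$, $\{m\}_p$ denotes the least nonnegative residue of $m$ modulo $p$. For an integer $a\not\equiv0\pmod p$, $$s_p(a)=(-1)^{|\{\{j,k\}:\ 1\le j<k\le (p-1)/2\ \text{and}\ \{aj^2\}_p>\{ak^2\}_p\}|}.$$ For $p\equiv1\pmod 4$ and an integer $c$, $\delta(c,p)=1$ if $c^{(p-1)/4}\equiv\left(\frac{p-1}{2}\right)!\pmod p$ and $\delta(c,p)=-1$ otherwise. *)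

theory Defs
  imports "HOL-Number_Theory.Number_Theory"
begin

definition sp :: "int \<Rightarrow> int \<Rightarrow> int" where
  "sp p a = (-1) ^ card {(j::int, k::int). 1 \<le> j \<and> j < k \<and> k \<le> (p - 1) div 2
                 \<and> (a * j^2) mod p > (a * k^2) mod p}"

definition delta :: "int \<Rightarrow> int \<Rightarrow> int" where
  "delta c p = (if [c ^ nat ((p - 1) div 4) = fact (nat ((p - 1) div 2))] (mod p) then 1 else -1)"

end

theory Submission
  imports Defs
begin

definition Qs :: "int set \<Rightarrow> int" where
  "Qs A = (\<Prod>(u,v)\<in>{(u,v). u \<in> A \<and> v \<in> A \<and> u < v}. v - u)"

lemma prod_sign:
  fixes f :: "int \<Rightarrow> int" assumes fin: "finite PP"
  shows "(\<Prod>(j,k)\<in>PP. f k - f j) = (-1)^card {(j,k)\<in>PP. f j > f k} * (\<Prod>(j,k)\<in>PP. \<bar>f k - f j\<bar>)"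
proof -
  have "(\<Prod>(j,k)\<in>PP. f k - f j) = (\<Prod>x\<in>PP. (if x \<in> {(j,k)\<in>PP. f j > f k} then -1 else 1) * (case x of (j,k) \<Rightarrow> \<bar>f k - f j\<bar>))"
    by (rule prod.cong) auto
  also have "\<dots> = (\<Prod>x\<in>PP. (if x \<in> {(j,k)\<in>PP. f j > f k} then -1 else 1)) * (\<Prod>(j,k)\<in>PP. \<bar>f k - f j\<bar>)"
    by (simp add: prod.distrib)
  also have "(\<Prod>x\<in>PP. (if x \<in> {(j,k)\<in>PP. f j > f k} then -1 else (1::int))) = (-1)^card {(j,k)\<in>PP. f j > f k}"
  proof -
    have "(\<Prod>x\<in>PP. (if x \<in> {(j,k)\<in>PP. f j > f k} then -1 else (1::int))) = (\<Prod>x\<in>PP \<inter> {x. x \<in> {(j,k)\<in>PP. f j > f k}}. -1)"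
      by (simp add: prod.If_cases[OF fin])
    also have "PP \<inter> {x. x \<in> {(j,k)\<in>PP. f j > f k}} = {(j,k)\<in>PP. f j > f k}" by auto
    finally show ?thesis by simp
  qed
  finally show ?thesis .
qed

lemma prod_abs_pairs:
  fixes f :: "int \<Rightarrow> int" assumes inj: "inj_on f I0"
  shows "(\<Prod>(j,k)\<in>{(j,k). j\<in>I0 \<and> k\<in>I0 \<and> j<k}. \<bar>f k - f j\<bar>) = Qs (f ` I0)"
    and "card {(j,k). j\<in>I0 \<and> k\<in>I0 \<and> j<k} = card {(u,v). u \<in> f`I0 \<and> v \<in> f`I0 \<and> u < v}"
proof -
  define h where "h = (\<lambda>(j,k). (min (f j) (f k), max (f j) (f k)))"
  let ?PP = "{(j,k). j\<in>I0 \<and> k\<in>I0 \<and> j<k}"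
  let ?T = "{(u,v). u \<in> f`I0 \<and> v \<in> f`I0 \<and> u < v}"
  have bij: "bij_betw h ?PP ?T"
  proof (rule bij_betw_imageI)
    show "inj_on h ?PP"
    proof (rule inj_onI)
      fix x y assume x: "x \<in> ?PP" and y: "y \<in> ?PP" and e: "h x = h y"
      obtain j k where xj: "x = (j,k)" by (cases x)
      obtain j' k' where yj: "y = (j',k')" by (cases y)
      have jk: "j \<in> I0" "k \<in> I0" "j < k" using x xj by auto
      have jk': "j' \<in> I0" "k' \<in> I0" "j' < k'" using y yj by auto
      have ne: "f j \<noteq> f k" "f j' \<noteq> f k'" using inj jk jk' by (metis inj_on_def less_irrefl)+
      have "(f j = f j' \<and> f k = f k') \<or> (f j = f k' \<and> f k = f j')"
        using e ne unfolding h_def xj yj by (auto simp: min_def max_def split: if_splits)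
      then show "x = y"
      proof
        assume "f j = f j' \<and> f k = f k'"
        then show ?thesis using inj jk jk' xj yj by (auto simp: inj_on_def)
      next
        assume "f j = f k' \<and> f k = f j'"
        then have "j = k'" "k = j'" using inj jk jk' by (auto simp: inj_on_def)
        then show ?thesis using jk jk' by auto
      qed
    qed
    show "h ` ?PP = ?T"
    proof
      show "h ` ?PP \<subseteq> ?T"
      proof
        fix z assume "z \<in> h ` ?PP"
        then obtain j k where jk: "j \<in> I0" "k \<in> I0" "j < k" and z: "z = h (j,k)" by auto
        have "f j \<noteq> f k" using inj jk by (metis inj_on_def less_irrefl)
        then show "z \<in> ?T" using jk z unfolding h_def by (auto simp: min_def max_def)
      qed
      show "?T \<subseteq> h ` ?PP"
      proof
        fix z assume "z \<in> ?T"
        then obtain j k where jk: "j \<in> I0" "k \<in> I0" "f j < f k" and z: "z = (f j, f k)" by auto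
        show "z \<in> h ` ?PP"
        proof (cases "j < k")
          case True
          then have "(j,k) \<in> ?PP" using jk by auto
          moreover have "h (j,k) = z" using jk z unfolding h_def by auto
          ultimately show ?thesis by force
        next
          case False
          then have "k < j" using jk by (cases "j = k") auto
          then have "(k,j) \<in> ?PP" using jk by auto
          moreover have "h (k,j) = z" using jk z unfolding h_def by auto
          ultimately show ?thesis by force
        qed
      qed
    qed
  qed
  have "(\<Prod>(j,k)\<in>?PP. \<bar>f k - f j\<bar>) = (\<Prod>x\<in>?PP. (\<lambda>(u,v). v - u) (h x))"
    by (rule prod.cong) (auto simp: h_def min_def max_def)
  also have "\<dots> = Qs (f ` I0)" unfolding Qs_def by (rule prod.reindex_bij_betw[OF bij])
  finally show "(\<Prod>(j,k)\<in>?PP. \<bar>f k - f j\<bar>) = Qs (f ` I0)" .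
  show "card ?PP = card ?T" using bij by (rule bij_betw_same_card)
qed

definition hI :: "int \<Rightarrow> int set" where "hI p = {1..(p-1) div 2}"
definition Sq :: "int \<Rightarrow> int \<Rightarrow> int set" where "Sq p c = (\<lambda>j. (c*j^2) mod p) ` hI p"
definition PS :: "int \<Rightarrow> (int\<times>int) set" where "PS p = {(j,k). j \<in> hI p \<and> k \<in> hI p \<and> j < k}"
definition Dp :: "int \<Rightarrow> int" where "Dp p = (\<Prod>(j,k)\<in>PS p. k^2 - j^2)"

lemma dvd_small_int: fixes p x :: int assumes "p dvd x" "\<bar>x\<bar> < p" shows "x = 0"
proof (rule ccontr)
  assume "x \<noteq> 0"
  then have "\<bar>p\<bar> \<le> \<bar>x\<bar>" using assms(1) by (simp add: dvd_imp_le_int)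
  then show False using assms(2) by linarith
qed

context fixes p :: int assumes pp: "prime p" and po: "odd p"
begin

lemma p_ge3: "p \<ge> 3"
proof -
  have "p \<ge> 2" using pp prime_ge_2_int by blast
  moreover have "p \<noteq> 2" using po by auto
  ultimately show ?thesis by linarith
qed

lemma p_eq: "p = 2 * ((p-1) div 2) + 1" using po by presburger

lemma fin_hI: "finite (hI p)" by (simp add: hI_def)
lemma fin_PS: "finite (PS p)"
proof -
  have "PS p \<subseteq> hI p \<times> hI p" by (auto simp: PS_def)
  then show ?thesis using finite_subset fin_hI by blast
qed

lemma sq_inj_aux: assumes "j \<in> hI p" "k \<in> hI p" "p dvd (k^2 - j^2)" shows "j = k"
proof -
  have e: "k^2 - j^2 = (k - j) * (k + j)" by (simp add: power2_eq_square algebra_simps)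
  have r: "1 \<le> j" "j \<le> (p-1) div 2" "1 \<le> k" "k \<le> (p-1) div 2" using assms(1,2) by (auto simp: hI_def)
  have "p dvd (k - j) \<or> p dvd (k + j)" using assms(3) e pp prime_dvd_mult_iff by metis
  then show ?thesis
  proof
    assume "p dvd (k - j)"
    moreover have "\<bar>k - j\<bar> < p" using r p_eq by linarith
    ultimately show ?thesis using dvd_small_int by fastforce
  next
    assume "p dvd (k + j)"
    moreover have "0 < k + j" "k + j < p" using r p_eq by linarith+
    ultimately show ?thesis using zdvd_imp_le by fastforce
  qed
qed

lemma hI_not_dvd: "j \<in> hI p \<Longrightarrow> \<not> p dvd j"
proof
  assume j: "j \<in> hI p" and "p dvd j"
  have "0 < j" "j < p" using j p_eq by (auto simp: hI_def)
  then show False using \<open>p dvd j\<close> zdvd_imp_le by fastforce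
qed

lemma sq_inj: assumes c: "\<not> p dvd c" shows "inj_on (\<lambda>j. (c*j^2) mod p) (hI p)"
proof (rule inj_onI)
  fix j k assume j: "j \<in> hI p" and k: "k \<in> hI p" and e: "(c*j^2) mod p = (c*k^2) mod p"
  then have "p dvd (c*k^2 - c*j^2)" by (metis mod_eq_dvd_iff)
  then have "p dvd c * (k^2 - j^2)" by (simp add: algebra_simps)
  then have "p dvd (k^2 - j^2)" using c pp prime_dvd_mult_iff by metis
  then show "j = k" using sq_inj_aux j k by blast
qed

lemma sp_eq: "sp p c = (-1)^card {(j,k)\<in>PS p. (\<lambda>j. (c*j^2) mod p) j > (\<lambda>j. (c*j^2) mod p) k}"
proof -
  have "{(j::int, k::int). 1 \<le> j \<and> j < k \<and> k \<le> (p - 1) div 2 \<and> (c * j^2) mod p > (c * k^2) mod p}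
     = {(j,k)\<in>PS p. (\<lambda>j. (c*j^2) mod p) j > (\<lambda>j. (c*j^2) mod p) k}"
    by (auto simp: PS_def hI_def)
  then show ?thesis by (simp add: sp_def)
qed

lemma L1: assumes c: "\<not> p dvd c"
  shows "[sp p c * Qs (Sq p c) = c^card (PS p) * Dp p] (mod p)"
proof -
  define f where "f = (\<lambda>j. (c*j^2) mod p)"
  have "(\<Prod>(j,k)\<in>PS p. f k - f j) = (-1)^card {(j,k)\<in>PS p. f j > f k} * (\<Prod>(j,k)\<in>PS p. \<bar>f k - f j\<bar>)"
    by (rule prod_sign[OF fin_PS])
  also have "(\<Prod>(j,k)\<in>PS p. \<bar>f k - f j\<bar>) = Qs (Sq p c)"
    unfolding PS_def Sq_def f_def by (rule prod_abs_pairs(1)[OF sq_inj[OF c]])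
  also have "(-1)^card {(j,k)\<in>PS p. f j > f k} = sp p c" using sp_eq f_def by simp
  finally have 1: "(\<Prod>(j,k)\<in>PS p. f k - f j) = sp p c * Qs (Sq p c)" .
  have "[(\<Prod>(j,k)\<in>PS p. f k - f j) = (\<Prod>x\<in>PS p. c * (case x of (j,k) \<Rightarrow> k^2 - j^2))] (mod p)"
  proof (rule cong_prod)
    fix x assume "x \<in> PS p"
    obtain j k where x: "x = (j,k)" by (cases x)
    have "[(c*k^2) mod p - (c*j^2) mod p = c*k^2 - c*j^2] (mod p)"
      by (simp add: cong_def mod_diff_eq)
    then show "[(case x of (j,k) \<Rightarrow> f k - f j) = c * (case x of (j,k) \<Rightarrow> k^2 - j^2)] (mod p)"
      by (simp add: x f_def algebra_simps)
  qed
  also have "(\<Prod>x\<in>PS p. c * (case x of (j,k) \<Rightarrow> k^2 - j^2)) = c^card (PS p) * Dp p"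
    by (simp add: prod.distrib Dp_def)
  finally show ?thesis using 1 by simp
qed

lemma Dp_coprime: "\<not> p dvd Dp p"
proof
  assume "p dvd Dp p"
  then obtain x where x: "x \<in> PS p" "p dvd (case x of (j,k) \<Rightarrow> k^2 - j^2)"
    unfolding Dp_def using prime_dvd_prod_iff[OF fin_PS pp] by blast
  obtain j k where "x = (j,k)" by (cases x)
  then have "j \<in> hI p" "k \<in> hI p" "j < k" "p dvd k^2 - j^2" using x by (auto simp: PS_def)
  then show False using sq_inj_aux by blast
qed

lemma card_hI: "card (hI p) = nat ((p-1) div 2)" by (simp add: hI_def)

lemma card_Sq: "\<not> p dvd c \<Longrightarrow> card (Sq p c) = nat ((p-1) div 2)"
  unfolding Sq_def using card_image[OF sq_inj] card_hI by simp

lemma Sq_sub: assumes c: "\<not> p dvd c" shows "Sq p c \<subseteq> {1..p-1}"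
proof
  fix x assume "x \<in> Sq p c"
  then obtain j where j: "j \<in> hI p" and x: "x = (c*j^2) mod p" by (auto simp: Sq_def)
  have "\<not> p dvd c*j^2" using c hI_not_dvd[OF j] pp by (simp add: prime_dvd_mult_iff prime_dvd_power_iff)
  then have "x \<noteq> 0" using x by auto
  moreover have "0 \<le> x" "x < p" using x p_ge3 by auto
  ultimately show "x \<in> {1..p-1}" by auto
qed

lemma qr_transfer: assumes t: "[t^2 = c] (mod p)" and e: "[c*j^2 = c'*k^2] (mod p)" and k: "\<not> p dvd k"
  shows "QuadRes p c'"
proof -
  have "coprime k p" using k pp by (meson coprime_commute prime_imp_coprime)
  then obtain k' where kk: "[k*k' = 1] (mod p)" using cong_solve_coprime_int by blast
  have "[c' = c' * (k*k')^2] (mod p)" using cong_pow[OF kk, of 2] by (metis cong_scalar_left cong_sym mult.right_neutral power_one)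
  also have "c' * (k*k')^2 = (c'*k^2) * k'^2" by (simp add: power_mult_distrib)
  also have "[(c'*k^2) * k'^2 = (c*j^2) * k'^2] (mod p)" using e by (simp add: cong_sym cong_scalar_right)
  also have "[(c*j^2) * k'^2 = (t^2*j^2) * k'^2] (mod p)" using t by (simp add: cong_sym cong_scalar_right)
  also have "(t^2*j^2) * k'^2 = (t*j*k')^2" by (simp add: power_mult_distrib)
  finally show ?thesis unfolding QuadRes_def by (meson cong_sym)
qed

lemma Sq_disj: assumes a: "QuadRes p a" and b: "\<not> QuadRes p b"
  shows "Sq p a \<inter> Sq p b = {}"
proof (rule ccontr)
  assume "Sq p a \<inter> Sq p b \<noteq> {}"
  then obtain x where "x \<in> Sq p a" "x \<in> Sq p b" by blast
  then obtain j k where j: "j \<in> hI p" and k: "k \<in> hI p" and e: "(a*j^2) mod p = (b*k^2) mod p"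
    unfolding Sq_def by (metis (no_types, lifting) imageE)
  obtain t where t: "[t^2 = a] (mod p)" using a by (auto simp: QuadRes_def)
  have "QuadRes p b" using qr_transfer[OF t _ hI_not_dvd[OF k]] e by (simp add: cong_def)
  then show False using b by simp
qed

lemma Sq_union: assumes a: "QuadRes p a" "\<not> p dvd a" and b: "\<not> QuadRes p b" "\<not> p dvd b"
  shows "Sq p a \<union> Sq p b = {1..p-1}"
proof (rule card_subset_eq)
  show "finite {1..p-1}" by simp
  show "Sq p a \<union> Sq p b \<subseteq> {1..p-1}" using Sq_sub a b by auto
  have "card (Sq p a \<union> Sq p b) = card (Sq p a) + card (Sq p b)"
    by (rule card_Un_disjoint) (simp_all only: Sq_disj[OF a(1) b(1)], simp_all add: Sq_def fin_hI)
  also have "\<dots> = card {1..p-1}" using card_Sq a b p_eq by simp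
  finally show "card (Sq p a \<union> Sq p b) = card {1..p-1}" .
qed

end

lemma prod_shift_fact: "(\<Prod>w\<in>{x<..x + int d}. w - x) = (fact d :: int)"
proof (induction d)
  case 0 then show ?case by simp
next
  case (Suc d)
  have "{x<..x + int (Suc d)} = insert (x + int d + 1) {x<..x + int d}" by auto
  then have "(\<Prod>w\<in>{x<..x + int (Suc d)}. w - x) = (int d + 1) * (\<Prod>w\<in>{x<..x + int d}. w - x)"
    by simp
  then show ?case using Suc by (simp add: algebra_simps)
qed

lemma card_pairs: "2 * card {(j,k). j \<in> {1..int N} \<and> k \<in> {1..int N} \<and> j < k} = N * (N - 1)"
proof (induction N)
  case 0
  have "{(j,k). j \<in> {1..int 0} \<and> k \<in> {1..int 0} \<and> j < k} = {}" by auto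
  then show ?case by simp
next
  case (Suc N)
  let ?A = "{(j,k). j \<in> {1..int N} \<and> k \<in> {1..int N} \<and> j < k}"
  let ?B = "(\<lambda>j. (j, int N + 1)) ` {1..int N}"
  have fA: "finite ?A" by (rule finite_subset[of _ "{1..int N} \<times> {1..int N}"]) auto
  have e: "{(j,k). j \<in> {1..int (Suc N)} \<and> k \<in> {1..int (Suc N)} \<and> j < k} = ?A \<union> ?B" by auto
  have cB: "card ?B = N" by (subst card_image) (auto simp: inj_on_def)
  have "card (?A \<union> ?B) = card ?A + card ?B" by (rule card_Un_disjoint) (use fA in auto)
  have ar: "N * (N - 1) + 2 * N = Suc N * (Suc N - 1)" by (cases N) auto
  show ?case using e cB Suc \<open>card (?A \<union> ?B) = card ?A + card ?B\<close> ar by simp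
qed

lemma sum_succ: "2 * (\<Sum>k<N. k + 1) = (N::nat) * (N + 1)"
  by (induction N) (auto simp: algebra_simps)

context fixes p :: int assumes pp: "prime p" and po: "odd p"
begin

lemma p_nat: "int (nat p) = p" using p_ge3[OF pp po] by simp

lemma wilson_int: "[fact (nat p - 1) = (-1::int)] (mod p)"
  using wilson_theorem[of "nat p"] pp p_nat by (simp add: prime_nat_iff_prime)

lemma fact_refl: "k < nat p \<Longrightarrow> [fact k * fact (nat p - 1 - k) = ((-1::int)^(k+1))] (mod p)"
proof (induction k)
  case 0 then show ?case using wilson_int by simp
next
  case (Suc k)
  have k: "k < nat p" using Suc by simp
  have nn: "nat p - 1 - k = Suc (nat p - 1 - Suc k)" using Suc by simp
  have c1: "of_nat (nat p - 1 - k) = p - 1 - int k" using Suc p_nat by linarith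
  have e1: "(fact (nat p - 1 - k) :: int) = (p - 1 - int k) * fact (nat p - 1 - Suc k)"
    by (metis nn fact_Suc c1)
  have c2: "[p - 1 - int k = - int (Suc k)] (mod p)" by (simp add: cong_iff_dvd_diff)
  have "[(-1::int)^(k+1) = fact k * fact (nat p - 1 - k)] (mod p)" using Suc.IH[OF k] by (simp add: cong_sym)
  also have "fact k * fact (nat p - 1 - k) = (p - 1 - int k) * (fact k * fact (nat p - 1 - Suc k) :: int)"
    using e1 by simp
  also have "[(p - 1 - int k) * (fact k * fact (nat p - 1 - Suc k)) = (- int (Suc k)) * (fact k * fact (nat p - 1 - Suc k) :: int)] (mod p)"
    using c2 by (rule cong_scalar_right)
  also have "(- int (Suc k)) * (fact k * fact (nat p - 1 - Suc k) :: int) = - (fact (Suc k) * fact (nat p - 1 - Suc k))"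
    by (simp add: algebra_simps)
  finally have "[- ((-1::int)^(k+1)) = fact (Suc k) * fact (nat p - 1 - Suc k)] (mod p)"
    by (metis cong_minus_minus_iff minus_minus)
  then show ?case by (simp add: cong_sym)
qed

lemma fact_half_sq: "[(fact (nat ((p-1) div 2)))^2 = ((-1::int)^(nat ((p-1) div 2)+1))] (mod p)"
proof -
  define N where "N = nat ((p-1) div 2)"
  have "N < nat p" "nat p - 1 - N = N" using p_eq[OF pp po] p_ge3[OF pp po] unfolding N_def by linarith+
  then show ?thesis using fact_refl[of N] unfolding N_def by (simp add: power2_eq_square)
qed

end

context fixes p :: int assumes pp: "prime p" and po: "odd p"
begin

lemma QU_val: "[Qs {1..p-1} = - fact (nat ((p-1) div 2)) * (-1)^(nat ((p-1) div 2) * (nat ((p-1) div 2) + 1) div 2)] (mod p)"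
proof -
  define N where "N = nat ((p-1) div 2)"
  define P where "P = nat p"
  have PN: "P = 2*N + 1" using p_eq[OF pp po] p_ge3[OF pp po] unfolding N_def P_def by linarith
  have pP: "p = int P" using p_nat[OF pp po] P_def by simp
  have "{(u,v). u \<in> {1..p-1} \<and> v \<in> {1..p-1} \<and> u < v} = Sigma {1..p-1} (\<lambda>u. {u<..p-1})" by fastforce
  then have "Qs {1..p-1} = (\<Prod>(u,v)\<in>Sigma {1..p-1} (\<lambda>u. {u<..p-1}). v - u)" by (simp add: Qs_def)
  also have "\<dots> = (\<Prod>u\<in>{1..p-1}. \<Prod>v\<in>{u<..p-1}. v - u)" by (rule prod.Sigma[symmetric]) auto
  also have "\<dots> = (\<Prod>u\<in>{1..p-1}. fact (nat (p - 1 - u)))"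
  proof (rule prod.cong)
    fix u assume "u \<in> {1..p-1}"
    then have "u + int (nat (p - 1 - u)) = p - 1" by simp
    then have h: "{u<..p-1} = {u<..u + int (nat (p - 1 - u))}" by (simp only:)
    show "(\<Prod>v\<in>{u<..p-1}. v - u) = fact (nat (p - 1 - u))" unfolding h by (rule prod_shift_fact)
  qed simp
  also have "\<dots> = (\<Prod>k<P - 1. fact k)"
    by (rule prod.reindex_bij_witness[where i = "\<lambda>k. p - 1 - int k" and j = "\<lambda>u. nat (p - 1 - u)"])
       (use pP in auto)
  finally have QU: "Qs {1..p-1} = (\<Prod>k<P - 1. fact k)" .
  have d: "(\<Prod>k<P. fact k) = (\<Prod>k<P - 1. fact k) * (fact (P - 1) :: int)"
    using PN by (metis add_diff_cancel_right' prod.lessThan_Suc Suc_eq_plus1)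
  have w: "[fact (P - 1) = (-1::int)] (mod p)" using wilson_int[OF pp po] P_def by simp
  have dd: "[(\<Prod>k<P. fact k) = - (\<Prod>k<P - 1. fact k) :: int] (mod p)"
    using cong_scalar_left[OF w, of "(\<Prod>k<P - 1. fact k) :: int"] d by simp
  have split: "{..<P} = {..<N} \<union> insert N {Suc N..<P}" using PN by auto
  have "(\<Prod>k<P. fact k) = (\<Prod>k<N. fact k) * (fact N * (\<Prod>k\<in>{Suc N..<P}. fact k) :: int)"
    unfolding split by (subst prod.union_disjoint) auto
  also have "(\<Prod>k\<in>{Suc N..<P}. fact k) = (\<Prod>k<N. fact (P - 1 - k) :: int)"
    by (rule prod.reindex_bij_witness[where i = "\<lambda>k. P - 1 - k" and j = "\<lambda>k. P - 1 - k"]) (use PN in auto)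
  finally have e: "(\<Prod>k<P. fact k) = (\<Prod>k<N. fact k * fact (P - 1 - k) :: int) * fact N"
    by (simp add: prod.distrib algebra_simps)
  have "[(\<Prod>k<N. fact k * fact (P - 1 - k) :: int) = (\<Prod>k<N. (-1)^(k+1))] (mod p)"
  proof (rule cong_prod)
    fix k assume "k \<in> {..<N}"
    then have "k < nat p" using PN P_def by simp
    then show "[fact k * fact (P - 1 - k) = (-1::int)^(k+1)] (mod p)" using fact_refl[OF pp po] P_def by simp
  qed
  also have "(\<Prod>k<N. (-1::int)^(k+1)) = (-1)^(\<Sum>k<N. k+1)" by (simp add: power_sum)
  also have "(\<Sum>k<N. k+1) = N * (N+1) div 2" using sum_succ[of N] by simp
  finally have f: "[(\<Prod>k<N. fact k * fact (P - 1 - k) :: int) = (-1)^(N * (N+1) div 2)] (mod p)" .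
  have "[- (\<Prod>k<P - 1. fact k) = (\<Prod>k<P. fact k) :: int] (mod p)" using dd by (simp add: cong_sym)
  also have "[(\<Prod>k<P. fact k) = (-1)^(N * (N+1) div 2) * (fact N :: int)] (mod p)"
    using e cong_scalar_right[OF f] by simp
  finally have "[(\<Prod>k<P - 1. fact k) = - (fact N :: int) * (-1)^(N * (N+1) div 2)] (mod p)"
    by (metis cong_minus_minus_iff minus_minus mult.commute mult_minus_left)
  then show ?thesis using QU N_def by simp
qed

end

definition Xc :: "int set \<Rightarrow> int set \<Rightarrow> int" where
  "Xc A B = (\<Prod>(u,v)\<in>{(u,v). ((u\<in>A \<and> v\<in>B) \<or> (u\<in>B \<and> v\<in>A)) \<and> u<v}. v - u)"

lemma Qs_union: assumes fA: "finite A" and fB: "finite B" and d: "A \<inter> B = {}"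
  shows "Qs (A \<union> B) = Qs A * Qs B * Xc A B"
proof -
  let ?PA = "{(u,v). u \<in> A \<and> v \<in> A \<and> u < v}"
  let ?PB = "{(u,v). u \<in> B \<and> v \<in> B \<and> u < v}"
  let ?M = "{(u,v). ((u\<in>A \<and> v\<in>B) \<or> (u\<in>B \<and> v\<in>A)) \<and> u<v}"
  have fin: "finite ?PA" "finite ?PB" "finite ?M"
    by (rule finite_subset[of _ "(A\<union>B) \<times> (A\<union>B)"]; use fA fB in auto)+
  have e: "{(u,v). u \<in> A \<union> B \<and> v \<in> A \<union> B \<and> u < v} = (?PA \<union> ?PB) \<union> ?M" by auto
  have "Qs (A \<union> B) = (\<Prod>(u,v)\<in>(?PA \<union> ?PB) \<union> ?M. v - u)" unfolding Qs_def e ..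
  also have "\<dots> = (\<Prod>(u,v)\<in>?PA \<union> ?PB. v - u) * (\<Prod>(u,v)\<in>?M. v - u)"
    by (rule prod.union_disjoint) (use fin d in auto)
  also have "(\<Prod>(u,v)\<in>?PA \<union> ?PB. v - u) = (\<Prod>(u,v)\<in>?PA. v - u) * (\<Prod>(u,v)\<in>?PB. v - u)"
    by (rule prod.union_disjoint) (use fin d in auto)
  finally show ?thesis unfolding Qs_def Xc_def .
qed

lemma prod_abs_cross: assumes d: "A \<inter> B = {}"
  shows "(\<Prod>(r,s)\<in>A\<times>B. \<bar>s - r\<bar>) = Xc A B"
proof -
  define h where "h = (\<lambda>(r::int,s::int). (min r s, max r s))"
  let ?M = "{(u,v). ((u\<in>A \<and> v\<in>B) \<or> (u\<in>B \<and> v\<in>A)) \<and> u<v}"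
  have bij: "bij_betw h (A\<times>B) ?M"
  proof (rule bij_betw_imageI)
    show "inj_on h (A\<times>B)"
    proof (rule inj_onI)
      fix x y assume x: "x \<in> A\<times>B" and y: "y \<in> A\<times>B" and e: "h x = h y"
      obtain r s where xr: "x = (r,s)" by (cases x)
      obtain r' s' where yr: "y = (r',s')" by (cases y)
      have "r \<in> A" "s \<in> B" "r' \<in> A" "s' \<in> B" using x y xr yr by auto
      then have "r \<noteq> s'" "s \<noteq> r'" using d by auto
      then show "x = y" using e unfolding xr yr h_def by (auto simp: min_def max_def split: if_splits)
    qed
    show "h ` (A\<times>B) = ?M"
    proof
      show "h ` (A\<times>B) \<subseteq> ?M"
      proof
        fix z assume "z \<in> h ` (A\<times>B)"
        then obtain r s where rs: "r \<in> A" "s \<in> B" "z = h (r,s)" by auto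
        then have "r \<noteq> s" using d by auto
        then show "z \<in> ?M" using rs unfolding h_def by (auto simp: min_def max_def)
      qed
      show "?M \<subseteq> h ` (A\<times>B)"
      proof
        fix z assume z: "z \<in> ?M"
        then obtain u v where uv: "z = (u,v)" "u < v" "(u\<in>A \<and> v\<in>B) \<or> (u\<in>B \<and> v\<in>A)" by auto
        then show "z \<in> h ` (A\<times>B)"
        proof (cases "u \<in> A \<and> v \<in> B")
          case True
          then have "h (u,v) = z" "(u,v) \<in> A\<times>B" using uv unfolding h_def by auto
          then show ?thesis by force
        next
          case False
          then have "h (v,u) = z" "(v,u) \<in> A\<times>B" using uv unfolding h_def by auto
          then show ?thesis by force
        qed
      qed
    qed
  qed
  have "(\<Prod>(r,s)\<in>A\<times>B. \<bar>s - r\<bar>) = (\<Prod>x\<in>A\<times>B. (\<lambda>(u,v). v - u) (h x))"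
    by (rule prod.cong) (auto simp: h_def min_def max_def)
  also have "\<dots> = Xc A B" unfolding Xc_def by (rule prod.reindex_bij_betw[OF bij])
  finally show ?thesis .
qed

lemma prod_neg: "(\<Prod>x\<in>S. - f x) = (-1::int)^card S * (\<Prod>x\<in>S. f x)"
proof -
  have "(\<Prod>x\<in>S. - f x) = (\<Prod>x\<in>S. (-1) * f x)" by simp
  also have "\<dots> = (\<Prod>x\<in>S. -1) * (\<Prod>x\<in>S. f x)" by (rule prod.distrib)
  finally show ?thesis by simp
qed

lemma W_lemma: assumes fA: "finite A"
  shows "(\<Prod>r\<in>A. \<Prod>r'\<in>A-{r}. r - r') = (-1::int)^card {(u,v). u\<in>A \<and> v\<in>A \<and> u<v} * Qs A ^2"
proof -
  let ?L = "{(u,v). u\<in>A \<and> v\<in>A \<and> u<v}"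
  let ?G = "{(u,v). u\<in>A \<and> v\<in>A \<and> u>v}"
  have fin: "finite ?L" "finite ?G" by (rule finite_subset[of _ "A \<times> A"]; use fA in auto)+
  have "(\<Prod>r\<in>A. \<Prod>r'\<in>A-{r}. r - r') = (\<Prod>(r,r')\<in>Sigma A (\<lambda>r. A-{r}). r - r')"
    by (rule prod.Sigma) (use fA in auto)
  also have "Sigma A (\<lambda>r. A-{r}) = ?L \<union> ?G" by auto
  also have "(\<Prod>(r,r')\<in>?L \<union> ?G. r - r') = (\<Prod>(r,r')\<in>?L. r - r') * (\<Prod>(r,r')\<in>?G. r - r')"
    by (rule prod.union_disjoint) (use fin in auto)
  also have "(\<Prod>(r,r')\<in>?L. r - r') = (\<Prod>x\<in>?L. - (case x of (u,v) \<Rightarrow> v - u))"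
    by (rule prod.cong) auto
  also have "\<dots> = (-1)^card ?L * Qs A" unfolding prod_neg Qs_def ..
  also have "(\<Prod>(r,r')\<in>?G. r - r') = Qs A" unfolding Qs_def
    by (rule prod.reindex_bij_witness[where i = "\<lambda>(u,v). (v,u)" and j = "\<lambda>(u,v). (v,u)"]) auto
  finally show ?thesis by (simp add: power2_eq_square)
qed

context fixes p :: int assumes pp: "prime p" and po: "odd p"
begin

lemma wil_point: assumes r: "r \<in> {1..p-1}"
  shows "[(\<Prod>t\<in>{1..p-1}-{r}. r - t) * r = -1] (mod p)"
proof -
  have "[(\<Prod>t\<in>{1..p-1}-{r}. r - t) = (\<Prod>t\<in>{1..p-1}-{r}. (r - t) mod p)] (mod p)"
    by (rule cong_prod) (simp add: cong_def)
  also have "(\<Prod>t\<in>{1..p-1}-{r}. (r - t) mod p) = (\<Prod>t\<in>{1..p-1}-{r}. t)"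
  proof (rule prod.reindex_bij_witness[where i = "\<lambda>w. (r - w) mod p" and j = "\<lambda>t. (r - t) mod p"])
    fix t assume t: "t \<in> {1..p-1}-{r}"
    have "(r - (r - t) mod p) mod p = (r - (r - t)) mod p" by (simp add: mod_diff_right_eq)
    then show "(r - (r - t) mod p) mod p = t" using t by simp
    show "(r - t) mod p \<in> {1..p-1}-{r}"
    proof -
      have "(r - t) mod p \<noteq> 0"
      proof
        assume "(r - t) mod p = 0"
        then have "p dvd (r - t)" by auto
        moreover have "\<bar>r - t\<bar> < p" using r t by auto
        ultimately have "r - t = 0" by (rule dvd_small_int)
        then show False using t by auto
      qed
      moreover have "(r - t) mod p \<noteq> r"
      proof
        assume "(r - t) mod p = r"
        then have "[r - t = r] (mod p)" using r by (simp add: cong_def)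
        then have "p dvd t" by (simp add: cong_iff_dvd_diff)
        then show False using t zdvd_imp_le by fastforce
      qed
      moreover have "0 \<le> (r - t) mod p" "(r - t) mod p < p" using r by auto
      ultimately show ?thesis by auto
    qed
  next
    fix w assume w: "w \<in> {1..p-1}-{r}"
    have "(r - (r - w) mod p) mod p = (r - (r - w)) mod p" by (simp add: mod_diff_right_eq)
    then show "(r - (r - w) mod p) mod p = w" using w by simp
    show "(r - w) mod p \<in> {1..p-1}-{r}"
    proof -
      have "(r - w) mod p \<noteq> 0"
      proof
        assume "(r - w) mod p = 0"
        then have "p dvd (r - w)" by auto
        moreover have "\<bar>r - w\<bar> < p" using r w by auto
        ultimately have "r - w = 0" by (rule dvd_small_int)
        then show False using w by auto
      qed
      moreover have "(r - w) mod p \<noteq> r"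
      proof
        assume "(r - w) mod p = r"
        then have "[r - w = r] (mod p)" using r by (simp add: cong_def)
        then have "p dvd w" by (simp add: cong_iff_dvd_diff)
        then show False using w zdvd_imp_le by fastforce
      qed
      moreover have "0 \<le> (r - w) mod p" "(r - w) mod p < p" using r by auto
      ultimately show ?thesis by auto
    qed
  qed simp
  finally have 1: "[(\<Prod>t\<in>{1..p-1}-{r}. r - t) * r = (\<Prod>t\<in>{1..p-1}-{r}. t) * r] (mod p)"
    by (rule cong_scalar_right)
  have f: "(\<Prod>t\<in>{1..p-1}. t) = fact (nat p - 1)"
  proof -
    have "{1..p-1} = {0<..0 + int (nat (p-1))}" using p_ge3[OF pp po] by auto
    then have "(\<Prod>t\<in>{1..p-1}. t) = (\<Prod>t\<in>{0<..0 + int (nat (p-1))}. t - 0)" by simp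
    also have "\<dots> = fact (nat (p - 1))" by (rule prod_shift_fact)
    also have "nat (p - 1) = nat p - 1" by simp
    finally show ?thesis .
  qed
  have e2: "(\<Prod>t\<in>{1..p-1}-{r}. t) * r = fact (nat p - 1)"
    using r f by (simp add: prod.remove mult.commute)
  show ?thesis using cong_trans[OF 1[unfolded e2] wilson_int[OF pp po]] .
qed

end

lemma cong_rw: "[a = b] (mod p) \<Longrightarrow> a' = a \<Longrightarrow> b' = b \<Longrightarrow> [a' = b'] (mod p)"
  by simp

lemma sp_sq: "sp p c * sp p c = 1"
  unfolding sp_def by (simp add: power_mult_distrib[symmetric] power_add[symmetric] mult_2[symmetric] flip: power_mult)

context fixes p a b :: int
  assumes pp: "prime p" and po: "odd p" and qa: "QuadRes p a" and na: "\<not> p dvd a"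
    and qb: "\<not> QuadRes p b" and nb: "\<not> p dvd b"
begin

lemma q1: "QuadRes p 1" unfolding QuadRes_def by (rule exI[of _ 1]) simp
lemma n1: "\<not> p dvd 1" using pp by (meson not_prime_unit)

lemma Sq_a1: "Sq p a = Sq p 1"
proof -
  have u1: "Sq p a \<union> Sq p b = {1..p-1}" "Sq p a \<inter> Sq p b = {}"
    using Sq_union[OF pp po qa na qb nb] Sq_disj[OF pp po qa qb] by auto
  have u2: "Sq p 1 \<union> Sq p b = {1..p-1}" "Sq p 1 \<inter> Sq p b = {}"
    using Sq_union[OF pp po q1 n1 qb nb] Sq_disj[OF pp po q1 qb] by auto
  show ?thesis using u1 u2 by blast
qed

lemma RN: "Sq p 1 \<union> Sq p b = {1..p-1}" "Sq p 1 \<inter> Sq p b = {}"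
  using Sq_union[OF pp po q1 n1 qb nb] Sq_disj[OF pp po q1 qb] by auto

lemma fin_Sq: "finite (Sq p c)" by (simp add: Sq_def fin_hI[OF pp po])

lemma hI_eq: "hI p = {1..int (nat ((p-1) div 2))}" using p_ge3[OF pp po] by (simp add: hI_def)

lemma card_PS: "2 * card (PS p) = nat ((p-1) div 2) * (nat ((p-1) div 2) - 1)"
  unfolding PS_def hI_eq by (rule card_pairs)

lemma card_pairs_R: "card {(u,v). u \<in> Sq p 1 \<and> v \<in> Sq p 1 \<and> u < v} = card (PS p)"
  unfolding PS_def Sq_def using prod_abs_pairs(2)[OF sq_inj[OF pp po n1]] by simp

lemma prod_hI: "(\<Prod>j\<in>hI p. j) = fact (nat ((p-1) div 2))"
proof -
  have "hI p = {0<..0 + int (nat ((p-1) div 2))}" using hI_eq by auto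
  then have "(\<Prod>j\<in>hI p. j) = (\<Prod>j\<in>{0<..0 + int (nat ((p-1) div 2))}. j - 0)" by simp
  also have "\<dots> = fact (nat ((p-1) div 2))" by (rule prod_shift_fact)
  finally show ?thesis .
qed

lemma prod_R: "[(\<Prod>x\<in>Sq p 1. x) = fact (nat ((p-1) div 2)) ^ 2] (mod p)"
proof -
  have "(\<Prod>x\<in>Sq p 1. x) = (\<Prod>j\<in>hI p. (1*j^2) mod p)"
    unfolding Sq_def by (rule prod.reindex[OF sq_inj[OF pp po n1], unfolded comp_def])
  also have "[(\<Prod>j\<in>hI p. (1*j^2) mod p) = (\<Prod>j\<in>hI p. j^2)] (mod p)"
    by (rule cong_prod) (simp add: cong_def)
  also have "(\<Prod>j\<in>hI p. j^2) = (\<Prod>j\<in>hI p. j)^2" by (simp add: prod_power_distrib)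
  finally show ?thesis using prod_hI by simp
qed

end

context fixes p a b :: int
  assumes pp: "prime p" and po: "odd p" and qa: "QuadRes p a" and na: "\<not> p dvd a"
    and qb: "\<not> QuadRes p b" and nb: "\<not> p dvd b" and p1: "p mod 4 = 1"
begin

lemma N_even: "even (nat ((p-1) div 2))"
proof -
  obtain q where "p = 4*q + 1" using p1 by (metis mod_div_mult_eq add.commute mult.commute)
  then have "nat ((p-1) div 2) = 2 * nat q" by simp
  then show ?thesis by simp
qed

lemma i_sq: "[fact (nat ((p-1) div 2)) ^2 = (-1::int)] (mod p)"
  using fact_half_sq[OF pp po] N_even by simp

lemma no_neg: assumes j: "j \<in> hI p" and k: "k \<in> hI p" shows "\<not> [j^2 + b*k^2 = 0] (mod p)"
proof
  assume h: "[j^2 + b*k^2 = 0] (mod p)"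
  define i where "i = (fact (nat ((p-1) div 2)) :: int)"
  have "[(i*j)^2 = i^2 * j^2] (mod p)" by (simp add: power_mult_distrib)
  also have "[i^2 * j^2 = (-1) * j^2] (mod p)" using i_sq unfolding i_def by (rule cong_scalar_right)
  also have "[(-1) * j^2 = b*k^2] (mod p)"
  proof -
    have "[j^2 + b*k^2 - j^2 = 0 - j^2] (mod p)" using h by (rule cong_diff) simp
    then show ?thesis by (simp add: cong_sym)
  qed
  finally have "[1*(i*j)^2 = b*k^2] (mod p)" by simp
  then have "QuadRes p b" using qr_transfer[OF pp po, of 1 1 "i*j" b k] hI_not_dvd[OF pp po k] by simp
  then show False using qb by simp
qed

lemma neg_closed: "x \<in> Sq p 1 \<Longrightarrow> p - x \<in> Sq p 1" "x \<in> Sq p b \<Longrightarrow> p - x \<in> Sq p b"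
proof -
  have U: "Sq p 1 \<union> Sq p b = {1..p-1}" "Sq p 1 \<inter> Sq p b = {}" using RN[OF pp po qa na qb nb] by auto
  have key: "\<not> (x \<in> Sq p 1 \<and> p - x \<in> Sq p b)" for x
  proof
    assume "x \<in> Sq p 1 \<and> p - x \<in> Sq p b"
    then obtain j k where j: "j \<in> hI p" and k: "k \<in> hI p" and xj: "x = (1*j^2) mod p" and xk: "p - x = (b*k^2) mod p"
      unfolding Sq_def by blast
    have "(j^2 + b*k^2) mod p = ((j^2) mod p + (b*k^2) mod p) mod p" by (simp add: mod_add_eq)
    also have "(j^2) mod p + (b*k^2) mod p = p" using xj xk by simp
    finally have "[j^2 + b*k^2 = 0] (mod p)" by (simp add: cong_def)
    then show False using no_neg j k by blast
  qed
  have pm: "x \<in> {1..p-1} \<Longrightarrow> p - x \<in> {1..p-1}" for x by auto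
  show "x \<in> Sq p 1 \<Longrightarrow> p - x \<in> Sq p 1"
  proof -
    assume x: "x \<in> Sq p 1"
    then have "p - x \<in> {1..p-1}" using U pm by blast
    moreover have "p - x \<notin> Sq p b" using key x by blast
    ultimately show ?thesis using U by blast
  qed
  show "x \<in> Sq p b \<Longrightarrow> p - x \<in> Sq p b"
  proof -
    assume x: "x \<in> Sq p b"
    then have px: "p - x \<in> {1..p-1}" using U pm by blast
    have "p - x \<notin> Sq p 1" using key[of "p - x"] x by simp
    then show ?thesis using U px by blast
  qed
qed

lemma card_G_even: "even (card {(r,s). (r,s) \<in> Sq p 1 \<times> Sq p b \<and> s < r})"
proof -
  let ?R = "Sq p 1" and ?N = "Sq p b"
  let ?G = "{(r,s). (r,s) \<in> ?R \<times> ?N \<and> s < r}"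
  let ?L = "{(r,s). (r,s) \<in> ?R \<times> ?N \<and> r < s}"
  define N where "N = nat ((p-1) div 2)"
  have U: "?R \<union> ?N = {1..p-1}" "?R \<inter> ?N = {}" using RN[OF pp po qa na qb nb] by auto
  have fin: "finite (?R \<times> ?N)" using fin_Sq[OF pp po qa na qb nb] by simp
  have img: "(\<lambda>(r,s). (p-r, p-s)) ` ?G = ?L"
  proof
    show "(\<lambda>(r,s). (p-r, p-s)) ` ?G \<subseteq> ?L" using neg_closed by auto
    show "?L \<subseteq> (\<lambda>(r,s). (p-r, p-s)) ` ?G"
    proof
      fix z assume "z \<in> ?L"
      then obtain r s where z: "z = (r,s)" "r \<in> ?R" "s \<in> ?N" "r < s" by auto
      then have "(p-r, p-s) \<in> ?G" using neg_closed by auto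
      moreover have "z = (\<lambda>(r,s). (p-r, p-s)) (p-r, p-s)" using z by simp
      ultimately show "z \<in> (\<lambda>(r,s). (p-r, p-s)) ` ?G" by blast
    qed
  qed
  have "inj_on (\<lambda>(r,s). (p-r, p-s)) ?G" by (auto simp: inj_on_def)
  then have cGL: "card ?L = card ?G" using img card_image by fastforce
  have "?R \<times> ?N = ?G \<union> ?L" using U by fastforce
  then have c0: "card (?R \<times> ?N) = card (?G \<union> ?L)" by (rule arg_cong)
  have "card (?G \<union> ?L) = card ?G + card ?L"
    by (rule card_Un_disjoint) (use fin in \<open>auto intro: finite_subset\<close>)
  moreover have "card (?R \<times> ?N) = N * N"
    using card_Sq[OF pp po n1[OF pp po qa na qb nb]] card_Sq[OF pp po nb] N_def by (simp add: card_cartesian_product)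
  ultimately have "2 * card ?G = N * N" using cGL c0 by linarith
  moreover obtain K where "N = 2 * K" using N_even N_def by blast
  ultimately have "card ?G = 2 * K * K" by simp
  then show ?thesis by simp
qed

end

context fixes p a b :: int
  assumes pp: "prime p" and po: "odd p" and qa: "QuadRes p a" and na: "\<not> p dvd a"
    and qb: "\<not> QuadRes p b" and nb: "\<not> p dvd b" and p1: "p mod 4 = 1"
begin

lemma Zprod: "(\<Prod>(r,s)\<in>Sq p 1 \<times> Sq p b. r - s) = Xc (Sq p 1) (Sq p b)"
proof -
  let ?R = "Sq p 1" and ?N = "Sq p b"
  have U: "?R \<union> ?N = {1..p-1}" "?R \<inter> ?N = {}" using RN[OF pp po qa na qb nb] by auto
  have fin: "finite (?R \<times> ?N)" using fin_Sq[OF pp po qa na qb nb] by simp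
  have "(\<Prod>(j,k)\<in>?R \<times> ?N. id k - id j) = (-1)^card {(j,k). (j,k)\<in>?R \<times> ?N \<and> id k < id j} * (\<Prod>(j,k)\<in>?R \<times> ?N. \<bar>id k - id j\<bar>)"
    by (rule prod_sign[OF fin])
  then have "(\<Prod>(r,s)\<in>?R \<times> ?N. s - r) = (-1)^card {(r,s). (r,s)\<in>?R \<times> ?N \<and> s < r} * (\<Prod>(r,s)\<in>?R \<times> ?N. \<bar>s - r\<bar>)"
    by simp
  also have "(-1::int)^card {(r,s). (r,s)\<in>?R \<times> ?N \<and> s < r} = 1"
    using card_G_even[OF pp po qa na qb nb p1] by simp
  also have "(\<Prod>(r,s)\<in>?R \<times> ?N. \<bar>s - r\<bar>) = Xc ?R ?N" by (rule prod_abs_cross[OF U(2)])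
  finally have 1: "(\<Prod>(r,s)\<in>?R \<times> ?N. s - r) = Xc ?R ?N" by simp
  have "(\<Prod>(r,s)\<in>?R \<times> ?N. r - s) = (\<Prod>x\<in>?R \<times> ?N. - (case x of (r,s) \<Rightarrow> s - r))"
    by (rule prod.cong) auto
  also have "\<dots> = (-1)^card (?R \<times> ?N) * (\<Prod>(r,s)\<in>?R \<times> ?N. s - r)" by (rule prod_neg)
  also have "card (?R \<times> ?N) = nat ((p-1) div 2) * nat ((p-1) div 2)"
    using card_Sq[OF pp po n1[OF pp po qa na qb nb]] card_Sq[OF pp po nb] by (simp add: card_cartesian_product)
  also have "(-1::int) ^ (nat ((p-1) div 2) * nat ((p-1) div 2)) = 1"
    using N_even[OF pp po qa na qb nb p1] by simp
  finally show ?thesis using 1 by simp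
qed

lemma G7: "[Xc (Sq p 1) (Sq p b) * ((-1)^card (PS p) * Qs (Sq p 1)^2) * (-1) = 1] (mod p)"
proof -
  let ?R = "Sq p 1" and ?N = "Sq p b" and ?U = "{1..p-1}"
  have U: "?R \<union> ?N = ?U" "?R \<inter> ?N = {}" using RN[OF pp po qa na qb nb] by auto
  have fR: "finite ?R" and fN: "finite ?N" using fin_Sq[OF pp po qa na qb nb] by auto
  have "[(\<Prod>r\<in>?R. (\<Prod>t\<in>?U-{r}. r - t) * r) = (\<Prod>r\<in>?R. -1)] (mod p)"
  proof (rule cong_prod)
    fix r assume "r \<in> ?R"
    then have "r \<in> ?U" using U by blast
    then show "[(\<Prod>t\<in>?U-{r}. r - t) * r = -1] (mod p)" by (rule wil_point[OF pp po])
  qed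
  also have "(\<Prod>r\<in>?R. (-1::int)) = 1"
    using card_Sq[OF pp po n1[OF pp po qa na qb nb]] N_even[OF pp po qa na qb nb p1] by simp
  also have "(\<Prod>r\<in>?R. (\<Prod>t\<in>?U-{r}. r - t) * r) = (\<Prod>r\<in>?R. (\<Prod>s\<in>?N. r - s) * (\<Prod>r'\<in>?R-{r}. r - r') * r)"
  proof (rule prod.cong)
    fix r assume r: "r \<in> ?R"
    have e: "?U - {r} = ?N \<union> (?R - {r})" using U r by blast
    have "(\<Prod>t\<in>?N \<union> (?R - {r}). r - t) = (\<Prod>s\<in>?N. r - s) * (\<Prod>r'\<in>?R-{r}. r - r')"
      by (rule prod.union_disjoint) (use fR fN U in auto)
    then have "(\<Prod>t\<in>?U-{r}. r - t) = (\<Prod>s\<in>?N. r - s) * (\<Prod>r'\<in>?R-{r}. r - r')"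
      by (simp only: e)
    then show "(\<Prod>t\<in>?U-{r}. r - t) * r = (\<Prod>s\<in>?N. r - s) * (\<Prod>r'\<in>?R-{r}. r - r') * r" by simp
  qed simp
  also have "\<dots> = (\<Prod>r\<in>?R. \<Prod>s\<in>?N. r - s) * (\<Prod>r\<in>?R. \<Prod>r'\<in>?R-{r}. r - r') * (\<Prod>r\<in>?R. r)"
    by (simp add: prod.distrib)
  also have "(\<Prod>r\<in>?R. \<Prod>s\<in>?N. r - s) = Xc ?R ?N"
    using Zprod by (simp add: prod.cartesian_product)
  also have "(\<Prod>r\<in>?R. \<Prod>r'\<in>?R-{r}. r - r') = (-1)^card (PS p) * Qs ?R ^2"
    using W_lemma[OF fR] card_pairs_R[OF pp po qa na qb nb] by simp
  finally have 1: "[Xc ?R ?N * ((-1)^card (PS p) * Qs ?R ^2) * (\<Prod>r\<in>?R. r) = 1] (mod p)" .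
  have 2: "[(\<Prod>r\<in>?R. r) = -1] (mod p)"
    using cong_trans[OF prod_R[OF pp po qa na qb nb] i_sq[OF pp po qa na qb nb p1]] .
  have "[Xc ?R ?N * ((-1)^card (PS p) * Qs ?R ^2) * (\<Prod>r\<in>?R. r) = Xc ?R ?N * ((-1)^card (PS p) * Qs ?R ^2) * (-1)] (mod p)"
    by (rule cong_scalar_left[OF 2])
  then show ?thesis using 1 by (meson cong_sym cong_trans)
qed

end

lemma coprime_pow_p: "prime (p::int) \<Longrightarrow> \<not> p dvd x \<Longrightarrow> coprime (x^k) p"
  by (meson coprime_commute coprime_power_left_iff prime_imp_coprime)

context fixes p a b :: int
  assumes pp: "prime p" and po: "odd p" and qa: "QuadRes p a" and na: "\<not> p dvd a"
    and qb: "\<not> QuadRes p b" and nb: "\<not> p dvd b"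
begin

lemma base_facts:
  "[sp p a * Qs (Sq p 1) = a^card (PS p) * Dp p] (mod p)"
  "[sp p b * Qs (Sq p b) = b^card (PS p) * Dp p] (mod p)"
  "[sp p 1 * Qs (Sq p 1) = Dp p] (mod p)"
  using L1[OF pp po na] L1[OF pp po nb] L1[OF pp po n1[OF pp po qa na qb nb]]
    Sq_a1[OF pp po qa na qb nb] by auto

lemma QR2: "[Qs (Sq p 1) ^ 2 = Dp p ^ 2] (mod p)"
proof -
  have "[(sp p 1 * Qs (Sq p 1)) * (sp p 1 * Qs (Sq p 1)) = Dp p * Dp p] (mod p)"
    using cong_mult[OF base_facts(3) base_facts(3)] .
  moreover have "(sp p 1 * Qs (Sq p 1)) * (sp p 1 * Qs (Sq p 1)) = (sp p 1 * sp p 1) * Qs (Sq p 1) ^ 2"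
    by (simp add: power2_eq_square ac_simps)
  ultimately show ?thesis using sp_sq by (simp add: power2_eq_square)
qed

lemma D2_coprime: "coprime (Dp p ^ 2) p" using coprime_pow_p[OF pp Dp_coprime[OF pp po]] .

lemma main1: assumes p1: "p mod 4 = 1"
  shows "[sp p a * sp p b * fact (nat ((p-1) div 2)) = (a*b)^card (PS p)] (mod p)"
proof -
  define m where "m = card (PS p)"
  define D where "D = Dp p"
  define R where "R = Sq p 1"
  define NN where "NN = Sq p b"
  define N where "N = nat ((p-1) div 2)"
  define sa where "sa = sp p a"
  define sb where "sb = sp p b"
  define X where "X = Xc R NN"
  have La: "[sa * Qs R = a^m * D] (mod p)" and Lb: "[sb * Qs NN = b^m * D] (mod p)"
    using base_facts unfolding sa_def sb_def m_def D_def R_def NN_def by auto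
  have Q2: "[Qs R ^2 = D^2] (mod p)" using QR2 unfolding R_def D_def .
  have QUe: "Qs {1..p-1} = Qs R * Qs NN * X"
    using Qs_union[of R NN] RN[OF pp po qa na qb nb] fin_Sq[OF pp po qa na qb nb]
    unfolding R_def NN_def X_def by metis
  have QUv: "[Qs {1..p-1} = - fact N * (-1)^(N * (N + 1) div 2)] (mod p)"
    using QU_val[OF pp po] unfolding N_def .
  have g7: "[X * ((-1)^m * Qs R^2) * (-1) = 1] (mod p)"
    using G7[OF pp po qa na qb nb p1] unfolding X_def m_def R_def NN_def .
  have s1: "[sa*sb*(Qs R*Qs NN) = (a*b)^m * D^2] (mod p)"
    using cong_mult[OF La Lb] by (simp add: power2_eq_square power_mult_distrib ac_simps)
  have s2: "[sa*sb*Qs {1..p-1} * ((-1)^m * (-1) * Qs R^2) = (a*b)^m * D^2] (mod p)"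
    using cong_mult[OF s1 g7] QUe by (simp add: ac_simps)
  have s3: "[sa*sb*Qs {1..p-1} * ((-1)^m * (-1) * Qs R^2) = sa*sb*Qs {1..p-1} * ((-1)^m * (-1) * D^2)] (mod p)"
    by (rule cong_scalar_left, rule cong_scalar_left, rule Q2)
  have s4: "[(sa*sb*Qs {1..p-1} * ((-1)^m * (-1))) * D^2 = (a*b)^m * D^2] (mod p)"
    using cong_trans[OF cong_sym[OF s3] s2] by (simp add: ac_simps)
  have s5: "[sa*sb*Qs {1..p-1} * ((-1)^m * (-1)) = (a*b)^m] (mod p)"
    using s4 cong_mult_rcancel[OF D2_coprime] unfolding D_def by blast
  have s6: "[sa*sb*((-1)^m * (-1)) * Qs {1..p-1} = sa*sb*((-1)^m * (-1)) * (- fact N * (-1)^(N * (N + 1) div 2))] (mod p)"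
    by (rule cong_scalar_left[OF QUv])
  have ev: "even (m + N * (N + 1) div 2)"
  proof -
    have "2 * m = N * (N - 1)" using card_PS[OF pp po qa na qb nb] unfolding m_def N_def .
    moreover have "2 * (N * (N + 1) div 2) = N * (N + 1)" by simp
    ultimately have "2 * (m + N * (N + 1) div 2) = N * (N - 1) + N * (N + 1)" by simp
    also have "\<dots> = 2 * (N * N)" by (cases N) (auto simp: algebra_simps)
    finally have "m + N * (N + 1) div 2 = N * N" by simp
    then show ?thesis using N_even[OF pp po qa na qb nb p1] unfolding N_def by simp
  qed
  have "sa*sb*((-1)^m * (-1)) * (- fact N * (-1)^(N * (N + 1) div 2)) = sa*sb*fact N * (-1)^(m + N * (N + 1) div 2)"
    by (simp add: power_add ac_simps)
  also have "\<dots> = sa*sb*fact N" using ev by simp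
  finally have eq7: "sa*sb*((-1)^m * (-1)) * (- fact N * (-1)^(N * (N + 1) div 2)) = sa*sb*fact N" .
  have s7: "[sa*sb*((-1)^m * (-1)) * Qs {1..p-1} = sa*sb*fact N] (mod p)" using s6 unfolding eq7 .
  have "[sa*sb*fact N = (a*b)^m] (mod p)"
    using cong_trans[OF cong_sym[OF s7]] s5 by (simp add: ac_simps)
  then show ?thesis unfolding sa_def sb_def N_def m_def .
qed

end

context fixes p :: int assumes pp: "prime p" and po: "odd p"
begin

lemma sp_m1: "sp p (-1) = (-1)^card (PS p) * sp p 1"
proof -
  define f where "f = (\<lambda>j. (1*j^2) mod p)"
  define g where "g = (\<lambda>j. ((-1)*j^2) mod p)"
  have fg: "g j = p - f j" if j: "j \<in> hI p" for j
  proof -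
    have "\<not> p dvd j^2" using hI_not_dvd[OF pp po j] pp by (simp add: prime_dvd_power_iff)
    then have "j^2 mod p \<noteq> 0" by auto
    then show ?thesis unfolding f_def g_def by (simp add: zmod_zminus1_eq_if)
  qed
  define S1 where "S1 = {(j,k)\<in>PS p. f j > f k}"
  define Sm where "Sm = {(j,k)\<in>PS p. g j > g k}"
  have inj: "inj_on f (hI p)" unfolding f_def by (rule sq_inj[OF pp po]) (use pp in \<open>meson not_prime_unit\<close>)
  have "Sm = PS p - S1"
  proof
    show "Sm \<subseteq> PS p - S1" unfolding Sm_def S1_def PS_def using fg by auto
    show "PS p - S1 \<subseteq> Sm"
    proof
      fix x assume x: "x \<in> PS p - S1"
      obtain j k where xj: "x = (j,k)" by (cases x)
      have jk: "j \<in> hI p" "k \<in> hI p" "j < k" using x xj by (auto simp: PS_def)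
      have "f j \<noteq> f k" using inj jk by (metis inj_on_def less_irrefl)
      then have "f j < f k" using x xj unfolding S1_def by auto
      then show "x \<in> Sm" using x xj jk fg unfolding Sm_def by auto
    qed
  qed
  moreover have "S1 \<subseteq> PS p" unfolding S1_def by auto
  moreover have "finite S1" using fin_PS[OF pp po] \<open>S1 \<subseteq> PS p\<close> finite_subset by blast
  ultimately have cS: "card Sm = card (PS p) - card S1" by (simp add: card_Diff_subset)
  have le: "card S1 \<le> card (PS p)" using fin_PS[OF pp po] unfolding S1_def by (intro card_mono) auto
  have spm: "sp p (-1) = (-1)^card Sm" using sp_eq[OF pp po, of "-1"] unfolding Sm_def g_def by simp
  have sp1: "sp p 1 = (-1)^card S1" using sp_eq[OF pp po, of 1] unfolding S1_def f_def by simp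
  have "(-1::int)^card (PS p) = (-1)^(card (PS p) - card S1) * (-1)^card S1"
    using le by (simp add: power_add[symmetric])
  then have "(-1::int)^card (PS p) * (-1)^card S1 = (-1)^(card (PS p) - card S1) * ((-1)^card S1 * (-1)^card S1)"
    by simp
  also have "(-1::int)^card S1 * (-1)^card S1 = 1" by (simp add: power_add[symmetric] flip: mult_2)
  finally show ?thesis using spm sp1 cS by simp
qed

end

context fixes p a b :: int
  assumes pp: "prime p" and po: "odd p" and qa: "QuadRes p a" and na: "\<not> p dvd a"
    and qb: "\<not> QuadRes p b" and nb: "\<not> p dvd b" and q3: "\<not> QuadRes p (-1)"
begin

lemma main3: "[sp p a * sp p b = (a*b)^card (PS p)] (mod p)"
proof -
  have nm1: "\<not> p dvd (-1)" using pp by (meson dvd_minus_iff not_prime_unit)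
  have Sqm: "Sq p (-1) = Sq p b"
  proof -
    have q1': "QuadRes p 1" unfolding QuadRes_def by (rule exI[of _ 1]) simp
    have n1': "\<not> p dvd 1" using pp by (meson not_prime_unit)
    have u1: "Sq p 1 \<union> Sq p (-1) = {1..p-1}" "Sq p 1 \<inter> Sq p (-1) = {}"
      using Sq_union[OF pp po q1' n1' q3 nm1] Sq_disj[OF pp po q1' q3] by auto
    have u2: "Sq p 1 \<union> Sq p b = {1..p-1}" "Sq p 1 \<inter> Sq p b = {}"
      using RN[OF pp po qa na qb nb] by auto
    show ?thesis using u1 u2 by blast
  qed
  define m where "m = card (PS p)"
  define D where "D = Dp p"
  define R where "R = Sq p 1"
  define NN where "NN = Sq p b"
  define sa where "sa = sp p a"
  define sb where "sb = sp p b"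
  define s1 where "s1 = sp p 1"
  have La: "[sa * Qs R = a^m * D] (mod p)" and Lb: "[sb * Qs NN = b^m * D] (mod p)"
    and L1': "[s1 * Qs R = D] (mod p)"
    using base_facts[OF pp po qa na qb nb] unfolding sa_def sb_def m_def D_def R_def NN_def s1_def by auto
  have Lm: "[sp p (-1) * Qs NN = (-1)^m * D] (mod p)"
    using L1[OF pp po nm1] Sqm unfolding NN_def m_def D_def by simp
  have s11: "s1 * s1 = 1" unfolding s1_def by (rule sp_sq)
  have c0: "[(s1 * Qs R) * (sp p (-1) * Qs NN) = D * ((-1)^m * D)] (mod p)" by (rule cong_mult[OF L1' Lm])
  have eqA: "(s1 * Qs R) * (sp p (-1) * Qs NN) = (-1)^m * (Qs R * Qs NN)"
  proof -
    have "(s1 * Qs R) * (sp p (-1) * Qs NN) = (s1 * s1) * (-1)^m * (Qs R * Qs NN)"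
      using sp_m1[OF pp po] unfolding s1_def m_def by (simp add: ac_simps)
    then show ?thesis using s11 by simp
  qed
  have eqB: "D * ((-1)^m * D) = (-1)^m * D^2" by (simp add: power2_eq_square ac_simps)
  have "[(-1)^m * (Qs R * Qs NN) = (-1)^m * D^2] (mod p)" using c0 unfolding eqA eqB .
  then have "[(-1)^m * ((-1)^m * (Qs R * Qs NN)) = (-1)^m * ((-1)^m * D^2)] (mod p)" by (rule cong_scalar_left)
  moreover have "(-1::int)^m * (-1)^m = 1" by (simp add: power_add[symmetric] flip: mult_2)
  ultimately have QQ: "[Qs R * Qs NN = D^2] (mod p)" by (simp add: mult.assoc[symmetric])
  have "[sa*sb*(Qs R*Qs NN) = (a*b)^m * D^2] (mod p)"
    using cong_mult[OF La Lb] by (simp add: power2_eq_square power_mult_distrib ac_simps)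
  moreover have "[sa*sb*(Qs R*Qs NN) = sa*sb*D^2] (mod p)" by (rule cong_scalar_left[OF QQ])
  ultimately have "[sa*sb*D^2 = (a*b)^m * D^2] (mod p)" by (meson cong_sym cong_trans)
  then have "[sa*sb = (a*b)^m] (mod p)"
    using cong_mult_rcancel[OF D2_coprime[OF pp po qa na qb nb]] unfolding D_def by blast
  then show ?thesis unfolding sa_def sb_def m_def .
qed

end

lemma neg1_pow: "(-1::int)^k = 1 \<or> (-1::int)^k = -1"
  by (cases "even k") auto

lemma pm1_eq: assumes "x = 1 \<or> x = -1" "y = 1 \<or> y = (-1::int)" "[x = y] (mod p)" "p \<ge> 3"
  shows "x = y"
proof (rule ccontr)
  assume "x \<noteq> y"
  then have "p dvd 2 \<or> p dvd -2" using assms(1,2,3) by (auto simp: cong_iff_dvd_diff)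
  then have "p dvd 2" by simp
  then show False using assms(4) zdvd_imp_le by fastforce
qed

lemma sp_pm: "sp p c = 1 \<or> sp p c = -1" unfolding sp_def by (rule neg1_pow)

theorem lemma3p1:
  fixes p a b :: int
  assumes "prime p" and "odd p"
    and "Legendre a p = 1" and "Legendre b p = -1"
  shows "(p mod 4 = 1 \<longrightarrow> sp p a * sp p b = (-1) ^ nat ((p + 3) div 4) * delta (a * b) p)
       \<and> (p mod 4 = 3 \<longrightarrow> sp p a * sp p b = (-1) ^ nat ((p - 3) div 4))"
proof -
  have pp: "prime p" and po: "odd p" using assms by auto
  have p3: "p \<ge> 3" using p_ge3[OF pp po] .
  have na: "\<not> p dvd a" and qa: "QuadRes p a" using assms(3) unfolding Legendre_def
    by (auto simp: cong_0_iff split: if_splits)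
  have nb: "\<not> p dvd b" and qb: "\<not> QuadRes p b" using assms(4) unfolding Legendre_def
    by (auto simp: cong_0_iff split: if_splits)
  define N where "N = nat ((p-1) div 2)"
  have eul: "[Legendre c p = c ^ N] (mod p)" for c
  proof -
    have "prime (nat p)" "2 < nat p" using pp p3 by (auto simp: prime_nat_iff_prime)
    from euler_criterion[OF this, of c] show ?thesis
      using p3 unfolding N_def by (simp add: nat_diff_distrib nat_div_distrib)
  qed
  have ea: "[a^N = 1] (mod p)" using eul[of a] assms(3) by (simp add: cong_sym)
  have eb: "[b^N = -1] (mod p)" using eul[of b] assms(4) by (simp add: cong_sym)
  have eab: "[(a*b)^N = -1] (mod p)"
    using cong_mult[OF ea eb] by (simp add: power_mult_distrib)
  define m where "m = card (PS p)"
  have m2: "2 * m = N * (N - 1)" using card_PS[OF pp po qa na qb nb] unfolding m_def N_def .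
  define sa where "sa = sp p a"
  define sb where "sb = sp p b"
  have sab: "sa * sb = 1 \<or> sa * sb = -1" using sp_pm[of p a] sp_pm[of p b] unfolding sa_def sb_def by auto
  show ?thesis
  proof (intro conjI impI)
    assume p1: "p mod 4 = 1"
    define e where "e = nat ((p-1) div 4)"
    obtain q where pq: "p = 4*q + 1" using p1 by (metis mod_div_mult_eq add.commute mult.commute)
    have q1: "q \<ge> 1" using pq p3 by linarith
    have Ne: "N = 2 * e" and e1: "e \<ge> 1" using pq q1 unfolding N_def e_def by auto
    have e3: "nat ((p + 3) div 4) = e + 1" using pq q1 unfolding e_def by auto
    have me: "m = e * (2*e - 1)" using m2 Ne by (cases e) auto
    define x where "x = (a*b)^e"
    define f where "f = (fact N :: int)"
    have x2: "[x^2 = -1] (mod p)" using eab unfolding x_def Ne by (simp add: power_mult[symmetric] mult.commute)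
    have f2: "[f^2 = -1] (mod p)" using i_sq[OF pp po qa na qb nb p1] unfolding f_def N_def .
    have nf: "\<not> p dvd f"
    proof
      assume "p dvd f"
      then have "[f^2 = 0] (mod p)" by (simp add: cong_0_iff power2_eq_square)
      then have "[-1 = 0] (mod p)" using f2 by (meson cong_sym cong_trans)
      then have "p dvd 1" by (simp add: cong_0_iff)
      then show False using pp by (meson not_prime_unit)
    qed
    have cf: "coprime f p" using coprime_pow_p[OF pp nf, of 1] by simp
    have "(a*b)^m = x * (x^2)^(e - 1)"
    proof -
      have "(a*b)^m = (a*b)^(e * (2*e - 1))" using me by simp
      also have "e * (2*e - 1) = e + e * 2 * (e - 1)" using e1 by (cases e) (auto simp: algebra_simps)
      also have "(a*b)^(e + e * 2 * (e - 1)) = x * (x^2)^(e - 1)" unfolding x_def by (simp add: power_add power_mult)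
      finally show ?thesis .
    qed
    moreover have "[x * (x^2)^(e - 1) = x * (-1)^(e-1)] (mod p)" by (rule cong_scalar_left, rule cong_pow, rule x2)
    ultimately have abm: "[(a*b)^m = x * (-1)^(e-1)] (mod p)" by simp
    have M1: "[sa * sb * f = x * (-1)^(e-1)] (mod p)"
      using cong_trans[OF main1[OF pp po qa na qb nb p1, folded m_def sa_def sb_def N_def, folded f_def] abm] .
    have sgn: "(-1::int)^(e+1) = (-1)^(e-1)" using e1 by (cases e) auto
    have "p dvd (x - f) * (x + f)"
    proof -
      have "[x^2 - f^2 = (-1) - (-1)] (mod p)" by (rule cong_diff[OF x2 f2])
      then have "p dvd x^2 - f^2" by (simp add: cong_0_iff)
      moreover have "x^2 - f^2 = (x - f) * (x + f)" by (simp add: power2_eq_square algebra_simps)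
      ultimately show ?thesis by simp
    qed
    then have "p dvd (x - f) \<or> p dvd (x + f)" using pp prime_dvd_mult_iff by blast
    have "sa * sb = (-1) ^ nat ((p + 3) div 4) * delta (a * b) p"
    proof (cases "[x = f] (mod p)")
      case True
      then have dl: "delta (a*b) p = 1" unfolding delta_def x_def f_def e_def N_def by simp
      have "[sa * sb * f = (-1)^(e-1) * f] (mod p)"
        using cong_trans[OF M1 cong_scalar_right[OF True]] by (simp add: ac_simps)
      then have "[sa * sb = (-1)^(e-1)] (mod p)" using cong_mult_rcancel[OF cf] by blast
      then have "sa * sb = (-1)^(e-1)" using pm1_eq[OF sab neg1_pow _ p3] by blast
      then show ?thesis using dl e3 sgn by simp
    next
      case False
      then have dl: "delta (a*b) p = -1" unfolding delta_def x_def f_def e_def N_def by simp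
      have "\<not> p dvd (x - f)" using False by (simp add: cong_iff_dvd_diff)
      then have "p dvd (x + f)" using \<open>p dvd (x - f) \<or> p dvd (x + f)\<close> by blast
      then have xf: "[x = -f] (mod p)" by (simp add: cong_iff_dvd_diff)
      have "[sa * sb * f = (- ((-1)^(e-1))) * f] (mod p)"
        using cong_trans[OF M1 cong_scalar_right[OF xf]] by (simp add: ac_simps)
      then have "[sa * sb = - ((-1)^(e-1))] (mod p)" using cong_mult_rcancel[OF cf] by blast
      moreover have "- ((-1::int)^(e-1)) = 1 \<or> - ((-1::int)^(e-1)) = -1" using neg1_pow[of "e-1"] by auto
      ultimately have "sa * sb = - ((-1)^(e-1))" using pm1_eq[OF sab _ _ p3] by blast
      then show ?thesis using dl e3 sgn by simp
    qed
    then show "sp p a * sp p b = (-1) ^ nat ((p + 3) div 4) * delta (a * b) p" unfolding sa_def sb_def .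
  next
    assume p3m: "p mod 4 = 3"
    define e where "e = nat ((p-3) div 4)"
    obtain q where pq: "p = 4*q + 3" using p3m by (metis mod_div_mult_eq add.commute mult.commute)
    have q0: "q \<ge> 0" using pq p3 by linarith
    have Ne: "N = 2 * e + 1" using pq q0 unfolding N_def e_def by auto
    have me: "m = N * e" using m2 Ne by simp
    have q3: "\<not> QuadRes p (-1)"
    proof
      assume "QuadRes p (-1)"
      moreover have "\<not> [-1 = 0] (mod p)"
      proof
        assume "[-1 = 0] (mod p)"
        then have "p dvd 1" by (simp add: cong_0_iff)
        then show False using pp by (meson not_prime_unit)
      qed
      ultimately have "Legendre (-1) p = 1" unfolding Legendre_def by simp
      then have "[1 = (-1::int)^N] (mod p)" using eul[of "-1"] by simp
      then have "[1 = -1] (mod p)" using Ne by simp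
      then have "p dvd 2" by (simp add: cong_iff_dvd_diff)
      then show False using p3 zdvd_imp_le by fastforce
    qed
    have "[sa * sb = (a*b)^m] (mod p)" using main3[OF pp po qa na qb nb q3] unfolding sa_def sb_def m_def .
    also have "(a*b)^m = ((a*b)^N)^e" using me by (simp add: power_mult)
    also have "[((a*b)^N)^e = (-1)^e] (mod p)" by (rule cong_pow[OF eab])
    finally have "sa * sb = (-1)^e" using pm1_eq[OF sab neg1_pow _ p3] by blast
    then show "sp p a * sp p b = (-1) ^ nat ((p - 3) div 4)" unfolding e_def sa_def sb_def .
  qed
qed

end
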